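(* Let $(\psi_j)_{j\ge1}$ be an orthonormal basis of $\mathbb L^2([0,1])$ consisting of infinitely differentiable functions and $(\lambda_j)_{j\ge1}$ a summable sequence of positive numbers such that: there exists $\varsigma\ge0$ such that for every integer $\ell\ge0$ there is $M_\ell>0$ with $|\partial^\ell\psi_j(u)|\le M_\ell\,j^{\ell+\varsigma}$ for all $j\ge1$, $u\in[0,1]$; and there exist $c,\gamma>0$ with $\lambda_j\le c\,j^{-(\gamma+1)}$ for all $j\ge1$. Let $\alpha:=\gamma-2\varsigma$ and assume $\alpha>0$; let $m:=\max\{k\in\mathbb Z:k<\alpha\}$, $\beta:=\alpha-m$, and $K(s,t)=\sum_{j\ge1}\lambda_j\psi_j(s)\psi_j(t)$. Then: if $\alpha$ is not an integer, $K\in C^{m,\beta}([0,1]^2)$; if $\alpha$ is an integer (so $\beta=1$), $K\in C^{m,\delta}([0,1]^2)$ for every $\delta\in(0,1)$.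
   Context: For $m\in\{0,1,\dots\}$ and $\beta\in(0,1]$, $C^{m,\beta}([0,1]^2)$ is the set of $K\in C^m([0,1]^2)$ for which there is $L>0$ such that for every multi-index $\mathbf v$ with $|\mathbf v|=m$ and all $(s,t),(s',t')\in[0,1]^2$, $|\partial^{\mathbf v}K(s,t)-\partial^{\mathbf v}K(s',t')|\le L\|(s,t)-(s',t')\|^\beta$ (Euclidean norm). *)

theory Defs
  imports "HOL-Analysis.Analysis"
begin

definition L2_01 :: "(real \<Rightarrow> real) \<Rightarrow> bool" where
  "L2_01 f \<longleftrightarrow> f measurable_on {0..1} \<and> (\<lambda>x. (f x)^2) integrable_on {0..1}"

definition inner_L2_01 :: "(real \<Rightarrow> real) \<Rightarrow> (real \<Rightarrow> real) \<Rightarrow> real" where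
  "inner_L2_01 f g = integral {0..1} (\<lambda>x. f x * g x)"

definition orthonormal_basis_L2_01 :: "(nat \<Rightarrow> real \<Rightarrow> real) \<Rightarrow> bool" where
  "orthonormal_basis_L2_01 \<psi> \<longleftrightarrow>
     (\<forall>j\<ge>1. L2_01 (\<psi> j)) \<and>
     (\<forall>i\<ge>1. \<forall>j\<ge>1. inner_L2_01 (\<psi> i) (\<psi> j) = (if i = j then 1 else 0)) \<and>
     (\<forall>f. L2_01 f \<longrightarrow>
        (\<lambda>n. integral {0..1}
               (\<lambda>x. (f x - (\<Sum>j=1..n. inner_L2_01 f (\<psi> j) * \<psi> j x))^2)) \<longlonglongrightarrow> 0)"

definition unit_square :: "(real \<times> real) set" where
  "unit_square = {0..1} \<times> {0..1}"

text \<open>C^{m,beta}([0,1]^2): D a b plays the role of the partial derivative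
  d^a/ds^a d^b/dt^b K (one-sided at the boundary); all partials of order <= m exist
  and are continuous on the square, and those of order exactly m are beta-Hoelder
  w.r.t. the Euclidean norm (the norm on real \<times> real is Euclidean).\<close>
definition holder_C :: "nat \<Rightarrow> real \<Rightarrow> (real \<times> real \<Rightarrow> real) \<Rightarrow> bool" where
  "holder_C m \<beta> K \<longleftrightarrow>
    (\<exists>D :: nat \<Rightarrow> nat \<Rightarrow> real \<times> real \<Rightarrow> real.
       (\<forall>p\<in>unit_square. D 0 0 p = K p) \<and>
       (\<forall>a b. a + b \<le> m \<longrightarrow> continuous_on unit_square (D a b)) \<and>
       (\<forall>a b. a + b < m \<longrightarrow> (\<forall>s\<in>{0..1}. \<forall>t\<in>{0..1}.
           ((\<lambda>x. D a b (x, t)) has_real_derivative D (Suc a) b (s, t)) (at s within {0..1}) \<and>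
           ((\<lambda>y. D a b (s, y)) has_real_derivative D a (Suc b) (s, t)) (at t within {0..1}))) \<and>
       (\<exists>L>0. \<forall>a b. a + b = m \<longrightarrow>
           (\<forall>p\<in>unit_square. \<forall>q\<in>unit_square. \<bar>D a b p - D a b q\<bar> \<le> L * dist p q powr \<beta>)))"

end

theory Submission
  imports Defs
begin

lemma bern_powr:
  fixes r x :: real
  assumes "0 \<le> r" "r \<le> 1" "0 \<le> x" "x \<le> 1"
  shows "(1 - x) powr r \<le> 1 - r * x"
proof (cases "x = 1")
  case True then show ?thesis using assms by simp
next
  case False
  then have "x < 1" using assms by simp
  have "(1 - x) powr r * 1 powr (1 - r) \<le> r * (1 - x) + (1 - r) * 1"
    by (rule Youngs_inequality_0) (use assms \<open>x<1\<close> in auto)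
  then show ?thesis by (simp add: algebra_simps)
qed

lemma head_step:
  fixes d :: real and N :: nat
  assumes "0 < d" "d < 1"
  shows "real (Suc N) powr (-d) \<le> (real (Suc N) powr (1-d) - real N powr (1-d)) / (1-d)"
proof -
  define n where "n = real (Suc N)"
  have n1: "n \<ge> 1" unfolding n_def by simp
  have "real N = n * (1 - 1/n)" using n1 unfolding n_def by (simp add: field_simps)
  then have "real N powr (1-d) = n powr (1-d) * (1 - 1/n) powr (1-d)"
    using n1 by (simp add: powr_mult)
  also have "\<dots> \<le> n powr (1-d) * (1 - (1-d) * (1/n))"
    by (rule mult_left_mono, rule bern_powr) (use assms n1 in auto)
  also have "\<dots> = n powr (1-d) - (1-d) * (n powr (1-d) / n)" by (simp add: algebra_simps)
  also have "n powr (1-d) / n = n powr (-d)" using n1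
    by (simp add: powr_diff powr_minus divide_inverse)
  finally have "real N powr (1-d) \<le> n powr (1-d) - (1-d) * n powr (-d)" .
  then show ?thesis using assms unfolding n_def[symmetric] by (simp add: field_simps)
qed

lemma head_sum:
  fixes d :: real
  assumes "0 < d" "d < 1"
  shows "(\<Sum>j<N. real (Suc j) powr (-d)) \<le> real N powr (1-d) / (1-d)"
proof (induction N)
  case 0 then show ?case by simp
next
  case (Suc N)
  have "(\<Sum>j<Suc N. real (Suc j) powr (-d)) = (\<Sum>j<N. real (Suc j) powr (-d)) + real (Suc N) powr (-d)"
    by simp
  also have "\<dots> \<le> real N powr (1-d) / (1-d) + (real (Suc N) powr (1-d) - real N powr (1-d)) / (1-d)"
    using Suc head_step[OF assms, of N] by linarith
  also have "\<dots> = real (Suc N) powr (1-d) / (1-d)" by (simp add: diff_divide_distrib)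
  finally show ?case .
qed

lemma tail_step:
  fixes d :: real and n :: real
  assumes "0 < d" "d < 1" "n \<ge> 2"
  shows "n powr (-1-d) \<le> ((n-1) powr (-d) - n powr (-d)) / d"
proof -
  have n1: "n > 1" using assms by simp
  have x: "0 \<le> 1/n" "1/n \<le> 1" using n1 by auto
  have b: "(1 - 1/n) powr d \<le> 1 - d * (1/n)"
    by (rule bern_powr) (use assms x in auto)
  have pos: "(1 - 1/n) powr d > 0" using n1 by simp
  have pos2: "1 - d * (1/n) > 0" using n1 assms by (simp add: field_simps)
  have "1 + d * (1/n) \<le> 1 / (1 - d*(1/n))"
  proof -
    define y where "y = d * (1/n)"
    have "y \<ge> 0" "1 - y > 0" using pos2 assms n1 unfolding y_def by auto
    then have "(1 + y) * (1 - y) \<le> 1" by (simp add: algebra_simps)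
    then have "1 + y \<le> 1 / (1 - y)" using \<open>1 - y > 0\<close> by (simp add: field_simps)
    then show ?thesis unfolding y_def .
  qed
  also have "\<dots> \<le> 1 / (1 - 1/n) powr d"
    using b pos by (simp add: frac_le)
  also have "\<dots> = (1 - 1/n) powr (-d)" using pos by (simp add: powr_minus divide_inverse)
  finally have key: "1 + d * (1/n) \<le> (1 - 1/n) powr (-d)" .
  have "n - 1 = n * (1 - 1/n)" using n1 by (simp add: field_simps)
  then have e: "(n-1) powr (-d) = n powr (-d) * (1 - 1/n) powr (-d)"
    using n1 by (simp add: powr_mult)
  have m: "n powr (-d) * (1/n) = n powr (-1-d)"
  proof -
    have "n powr (-1-d) = n powr (-1) * n powr (-d)" using powr_add[of n "-1" "-d"] by simp
    also have "n powr (-1) = 1/n" using n1 by (simp add: powr_neg_one)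
    finally show ?thesis by simp
  qed
  have "n powr (-d) + d * n powr (-1-d) = n powr (-d) + d * (n powr (-d) * (1/n))"
    unfolding m ..
  also have "\<dots> = n powr (-d) * (1 + d * (1/n))" by (simp add: algebra_simps)
  also have "\<dots> \<le> (n-1) powr (-d)"
    unfolding e by (rule mult_left_mono[OF key]) simp
  finally have "n powr (-d) + d * n powr (-1-d) \<le> (n-1) powr (-d)" .
  then show ?thesis using assms by (simp add: field_simps)
qed

lemma tail_sum:
  fixes d :: real and N :: nat
  assumes "0 < d" "d < 1" "N \<ge> 1"
  shows "summable (\<lambda>k. real (k + N + 1) powr (-1-d))"
    and "(\<Sum>k. real (k + N + 1) powr (-1-d)) \<le> real N powr (-d) / d"
proof -
  define f where "f k = real (k + N) powr (-d) / d" for k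
  have lim: "f \<longlonglongrightarrow> 0"
  proof -
    have fl: "filterlim (\<lambda>k. real (k + N)) at_top sequentially"
      by (rule filterlim_at_top_mono[OF filterlim_real_sequentially]) auto
    have "(\<lambda>k. real (k + N) powr (-d)) \<longlonglongrightarrow> 0"
      by (rule tendsto_neg_powr[OF _ fl]) (use assms in auto)
    then show ?thesis unfolding f_def using tendsto_divide_zero by blast
  qed
  have s: "(\<lambda>k. f k - f (Suc k)) sums (f 0 - 0)" by (rule telescope_sums'[OF lim])
  have le: "real (k + N + 1) powr (-1-d) \<le> f k - f (Suc k)" for k
  proof -
    have "real (k+N+1) powr (-1-d) \<le> ((real (k+N+1) - 1) powr (-d) - real (k+N+1) powr (-d)) / d"
      by (rule tail_step) (use assms in auto)
    then show ?thesis unfolding f_def by (simp add: diff_divide_distrib add.commute add.left_commute)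
  qed
  show sm: "summable (\<lambda>k. real (k + N + 1) powr (-1-d))"
    by (rule summable_comparison_test[OF _ sums_summable[OF s]]) (use le in auto)
  have "(\<Sum>k. real (k + N + 1) powr (-1-d)) \<le> (\<Sum>k. f k - f (Suc k))"
    by (rule suminf_le[OF le sm sums_summable[OF s]])
  also have "\<dots> = f 0" using s sums_unique by force
  finally show "(\<Sum>k. real (k + N + 1) powr (-1-d)) \<le> real N powr (-d) / d" by (simp add: f_def)
qed

lemma summable_Suc_powr:
  fixes e :: real assumes "e < -1"
  shows "summable (\<lambda>j. real (Suc j) powr e)"
proof -
  have "summable (\<lambda>j. real j powr e)" using summable_real_powr_iff assms by blast
  then show ?thesis using summable_Suc_iff[where f="\<lambda>j. real j powr e"] by simp
qed

lemma holder_series: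
  fixes g :: "nat \<Rightarrow> 'a::metric_space \<Rightarrow> real"
  assumes d: "0 < d" "d < 1" and AB: "A \<ge> 0" "B \<ge> 0"
    and bnd: "\<And>j p. p \<in> S \<Longrightarrow> \<bar>g j p\<bar> \<le> A * real (Suc j) powr (-1-d)"
    and lip: "\<And>j p q. p \<in> S \<Longrightarrow> q \<in> S \<Longrightarrow> \<bar>g j p - g j q\<bar> \<le> B * real (Suc j) powr (-d) * dist p q"
  shows "\<exists>L>0. \<forall>p\<in>S. \<forall>q\<in>S. \<bar>(\<Sum>j. g j p) - (\<Sum>j. g j q)\<bar> \<le> L * dist p q powr d"
proof -
  define Z where "Z = (\<Sum>j. real (Suc j) powr (-1-d))"
  have sZ: "summable (\<lambda>j. real (Suc j) powr (-1-d))" by (rule summable_Suc_powr) (use d in auto)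
  define L where "L = 2*A*Z + 2*B/(1-d) + 2*A/d + 1"
  have Z0: "Z \<ge> 0" unfolding Z_def by (rule suminf_nonneg[OF sZ]) simp
  have L0: "L > 0"
  proof -
    have "2*A*Z \<ge> 0" "2*B/(1-d) \<ge> 0" "2*A/d \<ge> 0" using AB Z0 d by auto
    then show ?thesis unfolding L_def by linarith
  qed
  have main: "\<bar>(\<Sum>j. g j p) - (\<Sum>j. g j q)\<bar> \<le> L * dist p q powr d" if pS: "p \<in> S" and qS: "q \<in> S" for p q
  proof -
    define h where "h = dist p q"
    define D where "D j = g j p - g j q" for j
    have sA: "summable (\<lambda>j. 2*A * real (Suc j) powr (-1-d))" using sZ by (intro summable_mult)
    have Dle: "\<bar>D j\<bar> \<le> 2*A * real (Suc j) powr (-1-d)" for j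
      using bnd[OF pS, of j] bnd[OF qS, of j] unfolding D_def by linarith
    have sp: "summable (\<lambda>j. g j p)"
      by (rule summable_comparison_test[of _ "\<lambda>j. A * real (Suc j) powr (-1-d)"])
         (use bnd[OF pS] sZ in \<open>auto intro: summable_mult\<close>)
    have sq: "summable (\<lambda>j. g j q)"
      by (rule summable_comparison_test[of _ "\<lambda>j. A * real (Suc j) powr (-1-d)"])
         (use bnd[OF qS] sZ in \<open>auto intro: summable_mult\<close>)
    have sD: "summable D" unfolding D_def using sp sq by (rule summable_diff)
    have eqD: "(\<Sum>j. g j p) - (\<Sum>j. g j q) = suminf D"
      unfolding D_def using suminf_diff[OF sp sq] by simp
    have sabsD: "summable (\<lambda>j. \<bar>D j\<bar>)"
      by (rule summable_comparison_test[OF _ sA]) (use Dle in auto)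
    consider "h = 0" | "h \<ge> 1" | "0 < h \<and> h < 1" unfolding h_def by force
    then show ?thesis
    proof cases
      case 1
      then have "p = q" unfolding h_def by simp
      then show ?thesis by simp
    next
      case 2
      have "\<bar>suminf D\<bar> \<le> (\<Sum>j. \<bar>D j\<bar>)" using summable_rabs[OF sabsD] by simp
      also have "\<dots> \<le> (\<Sum>j. 2*A * real (Suc j) powr (-1-d))"
        by (rule suminf_le[OF Dle sabsD sA])
      also have "\<dots> = 2*A*Z" unfolding Z_def using suminf_mult[OF sZ, of "2*A"] by simp
      also have "\<dots> \<le> L" unfolding L_def using AB d by simp
      also have "\<dots> \<le> L * h powr d"
      proof -
        have "h powr d \<ge> 1" using 2 d by (simp add: ge_one_powr_ge_zero)
        then show ?thesis using L0 by (simp add: mult_le_cancel_left1)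
      qed
      finally show ?thesis unfolding eqD h_def .
    next
      case 3
      then have h0: "h > 0" and h1: "h < 1" by auto
      define N where "N = nat \<lceil>1/h\<rceil>"
      have N1: "real N \<ge> 1/h" unfolding N_def by linarith
      have N2: "real N \<le> 2/h"
      proof -
        have hp: "1/h > 0" using h0 by simp
        have "real N = real_of_int \<lceil>1/h\<rceil>" unfolding N_def using hp by simp
        also have "\<dots> \<le> 1/h + 1" by (rule of_int_ceiling_le_add_one)
        finally have "real N \<le> 1/h + 1" .
        moreover have "1 \<le> 1/h" using h0 h1 by simp
        moreover have "2/h = 1/h + 1/h" by simp
        ultimately show ?thesis by linarith
      qed
      have Nge: "N \<ge> 1"
      proof -
        have "1/h > 1" using h0 h1 by simp
        then show ?thesis using N1 by linarith
      qed
      have split: "suminf D = (\<Sum>k. D (k + N)) + (\<Sum>i<N. D i)"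
        by (rule suminf_split_initial_segment[OF sD])
      have head: "\<bar>\<Sum>i<N. D i\<bar> \<le> 2*B/(1-d) * h powr d"
      proof -
        have "\<bar>\<Sum>i<N. D i\<bar> \<le> (\<Sum>i<N. \<bar>D i\<bar>)" by (rule sum_abs)
        also have "\<dots> \<le> (\<Sum>i<N. B * h * real (Suc i) powr (-d))"
          by (rule sum_mono) (use lip[OF pS qS] in \<open>simp add: D_def h_def mult_ac\<close>)
        also have "\<dots> = B * h * (\<Sum>i<N. real (Suc i) powr (-d))" by (simp add: sum_distrib_left)
        also have "\<dots> \<le> B * h * (real N powr (1-d) / (1-d))"
          by (rule mult_left_mono[OF head_sum[OF d]]) (use AB h0 in simp)
        also have "real N powr (1-d) \<le> (2/h) powr (1-d)"
          by (rule powr_mono2) (use d N2 in auto)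
        also have "(2/h) powr (1-d) = 2 powr (1-d) * h powr (d - 1)"
        proof -
          have a: "(2/h) powr (1-d) = 2 powr (1-d) / h powr (1-d)"
            by (rule powr_divide)
          have "h powr (d-1) = h powr (-(1-d))" by simp
          also have "\<dots> = 1 / h powr (1-d)" by (rule powr_minus_divide)
          finally show ?thesis unfolding a by simp
        qed
        also have "\<dots> \<le> 2 * h powr (d - 1)"
        proof -
          have "2 powr (1-d) \<le> 2 powr 1" by (rule powr_mono) (use d in auto)
          then show ?thesis by (intro mult_right_mono) auto
        qed
        finally have "\<bar>\<Sum>i<N. D i\<bar> \<le> B * h * (2 * h powr (d - 1) / (1-d))"
          using AB h0 d by (simp add: divide_right_mono mult_left_mono)
        also have "B * h * (2 * h powr (d - 1) / (1-d)) = 2*B/(1-d) * (h * h powr (d-1))"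
          by (simp add: field_simps)
        also have "h * h powr (d-1) = h powr d"
          using h0 by (simp add: powr_diff powr_minus divide_inverse)
        finally show ?thesis .
      qed
      have tail: "\<bar>\<Sum>k. D (k + N)\<bar> \<le> 2*A/d * h powr d"
      proof -
        have ts: "summable (\<lambda>k. real (k + N + 1) powr (-1-d))" by (rule tail_sum(1)[OF d Nge])
        have sDN: "summable (\<lambda>k. \<bar>D (k+N)\<bar>)" using sabsD by (subst summable_iff_shift)
        have le2: "\<bar>D (k+N)\<bar> \<le> 2*A * real (k + N + 1) powr (-1-d)" for k
          using Dle[of "k+N"] by simp
        have "\<bar>\<Sum>k. D (k + N)\<bar> \<le> (\<Sum>k. \<bar>D (k+N)\<bar>)" using summable_rabs[OF sDN] by simp
        also have "\<dots> \<le> (\<Sum>k. 2*A * real (k + N + 1) powr (-1-d))"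
          by (rule suminf_le[OF le2 sDN]) (use ts in \<open>auto intro: summable_mult\<close>)
        also have "\<dots> = 2*A * (\<Sum>k. real (k + N + 1) powr (-1-d))" using suminf_mult[OF ts] by simp
        also have "\<dots> \<le> 2*A * (real N powr (-d) / d)"
          by (rule mult_left_mono[OF tail_sum(2)[OF d Nge]]) (use AB in simp)
        also have "real N powr (-d) \<le> (1/h) powr (-d)"
          by (rule powr_mono2') (use d N1 h0 in auto)
        also have "(1/h) powr (-d) = h powr d" using h0 by (simp add: powr_divide powr_minus_divide)
        finally show ?thesis using AB d by (simp add: divide_right_mono mult_left_mono)
      qed
      have "\<bar>suminf D\<bar> \<le> 2*B/(1-d) * h powr d + 2*A/d * h powr d"
        unfolding split using head tail by linarith
      also have "\<dots> \<le> L * h powr d"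
      proof -
        have "2*B/(1-d) + 2*A/d \<le> L" unfolding L_def using AB Z0 by simp
        then have "(2*B/(1-d) + 2*A/d) * h powr d \<le> L * h powr d"
          by (rule mult_right_mono) simp
        then show ?thesis by (simp only: distrib_right)
      qed
      finally show ?thesis unfolding eqD h_def .
    qed
  qed
  show ?thesis using L0 main by blast
qed

lemma powr3:
  fixes x :: real
  assumes "e1 + e2 + e3 = e"
  shows "x powr e1 * x powr e2 * x powr e3 = x powr e"
  using assms by (simp add: powr_add[symmetric])

theorem mainTheorem11:
  fixes \<psi> :: "nat \<Rightarrow> real \<Rightarrow> real" and lam :: "nat \<Rightarrow> real"
    and \<sigma> c \<gamma> \<alpha> \<beta> :: real and m :: nat and K :: "real \<times> real \<Rightarrow> real"
  assumes onb: "orthonormal_basis_L2_01 \<psi>"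
    and lam_pos: "\<forall>j\<ge>1. lam j > 0"
    and lam_summable: "summable (\<lambda>j. lam (Suc j))"
    and \<sigma>_nonneg: "\<sigma> \<ge> 0"
    and smooth_bound: "\<exists>D\<psi> :: nat \<Rightarrow> nat \<Rightarrow> real \<Rightarrow> real.
          (\<forall>j\<ge>1. \<forall>u\<in>{0..1}. D\<psi> j 0 u = \<psi> j u) \<and>
          (\<forall>j\<ge>1. \<forall>l. \<forall>u\<in>{0..1}.
             (D\<psi> j l has_real_derivative D\<psi> j (Suc l) u) (at u within {0..1})) \<and>
          (\<forall>l. \<exists>M>0. \<forall>j\<ge>1. \<forall>u\<in>{0..1}. \<bar>D\<psi> j l u\<bar> \<le> M * real j powr (real l + \<sigma>))"
    and c_pos: "c > 0" and \<gamma>_pos: "\<gamma> > 0"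
    and lam_decay: "\<forall>j\<ge>1. lam j \<le> c * real j powr (-(\<gamma> + 1))"
    and \<alpha>_def: "\<alpha> = \<gamma> - 2 * \<sigma>"
    and \<alpha>_pos: "\<alpha> > 0"
    and m_def: "int m = (GREATEST k::int. real_of_int k < \<alpha>)"
    and \<beta>_def: "\<beta> = \<alpha> - real m"
    and K_def: "\<forall>s t. K (s, t) = (\<Sum>j. lam (Suc j) * \<psi> (Suc j) s * \<psi> (Suc j) t)"
  shows "(\<alpha> \<notin> \<int> \<longrightarrow> holder_C m \<beta> K) \<and>
         (\<alpha> \<in> \<int> \<longrightarrow> (\<forall>\<delta>. 0 < \<delta> \<and> \<delta> < 1 \<longrightarrow> holder_C m \<delta> K))"
proof -
  obtain D\<psi> :: "nat \<Rightarrow> nat \<Rightarrow> real \<Rightarrow> real" where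
    h0: "\<forall>j\<ge>1. \<forall>u\<in>{0..1}. D\<psi> j 0 u = \<psi> j u" and
    hd: "\<forall>j\<ge>1. \<forall>l. \<forall>u\<in>{0..1}. (D\<psi> j l has_real_derivative D\<psi> j (Suc l) u) (at u within {0..1})" and
    hb: "\<forall>l. \<exists>M>0. \<forall>j\<ge>1. \<forall>u\<in>{0..1}. \<bar>D\<psi> j l u\<bar> \<le> M * real j powr (real l + \<sigma>)"
    using smooth_bound by blast
  from hb have "\<exists>M. \<forall>l. M l > 0 \<and> (\<forall>j\<ge>1. \<forall>u\<in>{0..1}. \<bar>D\<psi> j l u\<bar> \<le> M l * real j powr (real l + \<sigma>))"
    by (rule choice)
  then obtain M where Mpos: "\<And>l. M l > 0"
    and Mb: "\<And>l j u. j \<ge> 1 \<Longrightarrow> u \<in> {0..1} \<Longrightarrow> \<bar>D\<psi> j l u\<bar> \<le> M l * real j powr (real l + \<sigma>)"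
    by blast
  have Mnn: "0 \<le> M l" for l using Mpos[of l] by simp
  define \<phi> where "\<phi> = (\<lambda>j l. D\<psi> (Suc j) l)"
  define nn where "nn = (\<lambda>j. real (Suc j))"
  have nn1: "nn j \<ge> 1" for j unfolding nn_def by simp
  have phi0: "\<phi> j 0 u = \<psi> (Suc j) u" if "u \<in> {0..1}" for j u
    using h0 that unfolding \<phi>_def by simp
  have phid: "(\<phi> j l has_real_derivative \<phi> j (Suc l) u) (at u within {0..1})" if "u \<in> {0..1}" for j l u
    using hd that unfolding \<phi>_def by simp
  have phib: "\<bar>\<phi> j l u\<bar> \<le> M l * nn j powr (real l + \<sigma>)" if "u \<in> {0..1}" for j l u
    using Mb[of "Suc j" u l] that unfolding \<phi>_def nn_def by simp
  have phil: "\<bar>\<phi> j l x - \<phi> j l y\<bar> \<le> M (Suc l) * nn j powr (real (Suc l) + \<sigma>) * \<bar>x - y\<bar>"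
    if "x \<in> {0..1}" "y \<in> {0..1}" for j l x y
  proof -
    have "norm (\<phi> j l x - \<phi> j l y) \<le> (M (Suc l) * nn j powr (real (Suc l) + \<sigma>)) * norm (x - y)"
      by (rule field_differentiable_bound[where S="{0..1}" and f' = "\<phi> j (Suc l)"])
         (use phid phib[where l="Suc l"] that in \<open>auto simp del: of_nat_Suc\<close>)
    then show ?thesis by simp
  qed
  have lam0: "0 \<le> lam (Suc j)" for j using lam_pos by (simp add: less_imp_le)
  have lamb: "lam (Suc j) \<le> c * nn j powr (-(\<gamma>+1))" for j
    using lam_decay[rule_format, of "Suc j"] unfolding nn_def by (simp del: of_nat_Suc)
  have mfacts: "real m < \<alpha>" "\<alpha> \<le> real m + 1"
  proof -
    have G: "(GREATEST k::int. real_of_int k < \<alpha>) = \<lceil>\<alpha>\<rceil> - 1"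
    proof (rule Greatest_equality)
      show "real_of_int (\<lceil>\<alpha>\<rceil> - 1) < \<alpha>" using ceiling_correct[of \<alpha>] by simp
      fix y :: int assume "real_of_int y < \<alpha>"
      then have "real_of_int y < real_of_int \<lceil>\<alpha>\<rceil>" using ceiling_correct[of \<alpha>] by linarith
      then show "y \<le> \<lceil>\<alpha>\<rceil> - 1" by simp
    qed
    have "real m = real_of_int (\<lceil>\<alpha>\<rceil> - 1)" using m_def G by (metis of_int_of_nat_eq)
    then show "real m < \<alpha>" "\<alpha> \<le> real m + 1" using ceiling_correct[of \<alpha>] by auto
  qed
  define T where "T = (\<lambda>a b j (p::real\<times>real). lam (Suc j) * \<phi> j a (fst p) * \<phi> j b (snd p))"
  define D where "D = (\<lambda>a b p. \<Sum>j. T a b j p)"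
  have sqI: "fst p \<in> {0..1} \<and> snd p \<in> {0..1}" if "p \<in> unit_square" for p
    using that unfolding unit_square_def by (auto simp: mem_Times_iff)
  have Tb: "\<bar>T a b j p\<bar> \<le> c * M a * M b * nn j powr (real a + real b - \<alpha> - 1)"
    if "p \<in> unit_square" for a b j p
  proof -
    have s: "fst p \<in> {0..1}" "snd p \<in> {0..1}" using sqI[OF that] by auto
    have "\<bar>T a b j p\<bar> = lam (Suc j) * \<bar>\<phi> j a (fst p)\<bar> * \<bar>\<phi> j b (snd p)\<bar>"
      using lam0[of j] by (simp add: T_def abs_mult)
    also have "\<dots> \<le> (c * nn j powr (-(\<gamma>+1))) * (M a * nn j powr (real a + \<sigma>)) * (M b * nn j powr (real b + \<sigma>))"
      by (intro mult_mono lamb phib s) (use c_pos Mpos lam0 in \<open>auto intro!: mult_nonneg_nonneg simp: less_imp_le\<close>)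
    also have "\<dots> = c * M a * M b * (nn j powr (-(\<gamma>+1)) * nn j powr (real a + \<sigma>) * nn j powr (real b + \<sigma>))"
      by (simp add: algebra_simps)
    also have "nn j powr (-(\<gamma>+1)) * nn j powr (real a + \<sigma>) * nn j powr (real b + \<sigma>) = nn j powr (real a + real b - \<alpha> - 1)"
      by (rule powr3) (simp add: \<alpha>_def)
    finally show ?thesis .
  qed
  have Tl: "\<bar>T a b j p - T a b j q\<bar> \<le> c * (M (Suc a) * M b + M a * M (Suc b)) * nn j powr (real a + real b - \<alpha>) * dist p q"
    if "p \<in> unit_square" "q \<in> unit_square" for a b j p q
  proof -
    obtain s t where p: "p = (s,t)" by (cases p)
    obtain s' t' where q: "q = (s',t')" by (cases q)
    have st: "s \<in> {0..1}" "t \<in> {0..1}" "s' \<in> {0..1}" "t' \<in> {0..1}" using sqI[OF that(1)] sqI[OF that(2)] p q by auto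
    have ds: "\<bar>s - s'\<bar> \<le> dist p q" using dist_fst_le[of p q] p q by (simp add: dist_real_def)
    have dt: "\<bar>t - t'\<bar> \<le> dist p q" using dist_snd_le[of p q] p q by (simp add: dist_real_def)
    define X where "X = \<phi> j a s" define X' where "X' = \<phi> j a s'"
    define Y where "Y = \<phi> j b t" define Y' where "Y' = \<phi> j b t'"
    define P1 where "P1 = M (Suc a) * nn j powr (real (Suc a) + \<sigma>)"
    define P2 where "P2 = M b * nn j powr (real b + \<sigma>)"
    define P3 where "P3 = M a * nn j powr (real a + \<sigma>)"
    define P4 where "P4 = M (Suc b) * nn j powr (real (Suc b) + \<sigma>)"
    have P0: "P1 \<ge> 0" "P2 \<ge> 0" "P3 \<ge> 0" "P4 \<ge> 0"
      unfolding P1_def P2_def P3_def P4_def using Mnn by auto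
    have e1: "T a b j p - T a b j q = lam (Suc j) * ((X - X') * Y + X' * (Y - Y'))"
      by (simp add: T_def p q X_def X'_def Y_def Y'_def algebra_simps)
    have k1: "\<bar>(X - X') * Y\<bar> \<le> (P1 * dist p q) * P2"
      unfolding abs_mult
    proof (rule mult_mono)
      show "\<bar>X - X'\<bar> \<le> P1 * dist p q"
        using phil[OF st(1) st(3), of j a] ds P0 unfolding X_def X'_def P1_def
        by (meson mult_left_mono order_trans)
      show "\<bar>Y\<bar> \<le> P2" using phib[OF st(2)] unfolding Y_def P2_def .
    qed (use P0 in auto)
    have k2: "\<bar>X' * (Y - Y')\<bar> \<le> P3 * (P4 * dist p q)"
      unfolding abs_mult
    proof (rule mult_mono)
      show "\<bar>Y - Y'\<bar> \<le> P4 * dist p q"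
        using phil[OF st(2) st(4), of j b] dt P0 unfolding Y_def Y'_def P4_def
        by (meson mult_left_mono order_trans)
      show "\<bar>X'\<bar> \<le> P3" using phib[OF st(3)] unfolding X'_def P3_def .
    qed (use P0 in auto)
    have "\<bar>T a b j p - T a b j q\<bar> = lam (Suc j) * \<bar>(X - X') * Y + X' * (Y - Y')\<bar>"
      unfolding e1 abs_mult using lam0[of j] by simp
    also have "\<dots> \<le> lam (Suc j) * ((P1 * dist p q) * P2 + P3 * (P4 * dist p q))"
      by (rule mult_left_mono) (use k1 k2 lam0 abs_triangle_ineq[of "(X - X') * Y" "X' * (Y - Y')"] in auto)
    also have "\<dots> \<le> (c * nn j powr (-(\<gamma>+1))) * ((P1 * dist p q) * P2 + P3 * (P4 * dist p q))"
      by (rule mult_right_mono[OF lamb]) (use P0 in auto)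
    also have "\<dots> = c * dist p q * (M (Suc a) * M b * (nn j powr (-(\<gamma>+1)) * nn j powr (real (Suc a) + \<sigma>) * nn j powr (real b + \<sigma>))
         + M a * M (Suc b) * (nn j powr (-(\<gamma>+1)) * nn j powr (real a + \<sigma>) * nn j powr (real (Suc b) + \<sigma>)))"
      unfolding P1_def P2_def P3_def P4_def by (simp add: algebra_simps)
    also have "nn j powr (-(\<gamma>+1)) * nn j powr (real (Suc a) + \<sigma>) * nn j powr (real b + \<sigma>) = nn j powr (real a + real b - \<alpha>)"
      by (rule powr3) (simp add: \<alpha>_def)
    also have "nn j powr (-(\<gamma>+1)) * nn j powr (real a + \<sigma>) * nn j powr (real (Suc b) + \<sigma>) = nn j powr (real a + real b - \<alpha>)"
      by (rule powr3) (simp add: \<alpha>_def)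
    finally show ?thesis by (simp add: algebra_simps)
  qed
  have summ: "summable (\<lambda>j. C * nn j powr (real a + real b - \<alpha> - 1))" if "a + b \<le> m" for a b C
  proof -
    have "real a + real b - \<alpha> - 1 < -1" using that mfacts by simp
    then show ?thesis unfolding nn_def by (intro summable_mult summable_Suc_powr)
  qed
  have Tsum: "summable (\<lambda>j. T a b j p)" if "a + b \<le> m" "p \<in> unit_square" for a b p
    by (rule summable_comparison_test[OF _ summ[OF that(1), of "c * M a * M b"]]) (use Tb[OF that(2)] in auto)
  have cont: "continuous_on unit_square (D a b)" if "a + b \<le> m" for a b
  proof -
    have ul: "uniform_limit unit_square (\<lambda>n p. \<Sum>i<n. T a b i p) (D a b) sequentially"
      unfolding D_def
      by (rule Weierstrass_m_test[OF _ summ[OF that, of "c * M a * M b"]]) (use Tb in auto)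
    have phic: "continuous_on {0..1} (\<phi> i l)" for i l
      by (rule DERIV_continuous_on[OF phid])
    have tc: "continuous_on unit_square (T a b i)" for i
    proof -
      have f: "fst ` unit_square \<subseteq> {0..1}" "snd ` unit_square \<subseteq> {0..1}" using sqI by auto
      have "continuous_on unit_square (\<lambda>p. \<phi> i a (fst p))"
        by (rule continuous_on_compose2[OF phic[of i a] continuous_on_fst[OF continuous_on_id] f(1)])
      moreover have "continuous_on unit_square (\<lambda>p. \<phi> i b (snd p))"
        by (rule continuous_on_compose2[OF phic[of i b] continuous_on_snd[OF continuous_on_id] f(2)])
      ultimately show ?thesis unfolding T_def by (intro continuous_intros)
    qed
    show ?thesis
      by (rule uniform_limit_theorem[OF _ ul]) (use tc in \<open>auto intro!: always_eventually continuous_on_sum\<close>)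
  qed
  have dx: "((\<lambda>x. D a b (x, t)) has_real_derivative D (Suc a) b (s, t)) (at s within {0..1})"
    if ab: "a + b < m" and st: "s \<in> {0..1}" "t \<in> {0..1}" for a b s t
  proof -
    have sq: "(x, t) \<in> unit_square" if "x \<in> {0..1}" for x
      using that st unfolding unit_square_def by auto
    have der: "((\<lambda>x. T a b j (x, t)) has_field_derivative T (Suc a) b j (x, t)) (at x within {0..1})"
      if "x \<in> {0..1}" for j x
    proof -
      have "((\<lambda>x. lam (Suc j) * \<phi> j a x) has_field_derivative lam (Suc j) * \<phi> j (Suc a) x) (at x within {0..1})"
        by (rule DERIV_cmult[OF phid[OF that]])
      then have "((\<lambda>x. lam (Suc j) * \<phi> j a x * \<phi> j b t) has_field_derivative lam (Suc j) * \<phi> j (Suc a) x * \<phi> j b t) (at x within {0..1})"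
        by (rule DERIV_cmult_right)
      then show ?thesis by (simp add: T_def)
    qed
    have ab1: "Suc a + b \<le> m" using ab by simp
    have ul: "uniform_limit {0..1} (\<lambda>n x. \<Sum>i<n. T (Suc a) b i (x, t)) (\<lambda>x. D (Suc a) b (x, t)) sequentially"
      unfolding D_def
    proof (rule Weierstrass_m_test[OF _ summ[OF ab1, of "c * M (Suc a) * M b"]])
      fix n and x :: real assume x: "x \<in> {0..1}"
      show "norm (T (Suc a) b n (x, t)) \<le> c * M (Suc a) * M b * nn n powr (real (Suc a) + real b - \<alpha> - 1)"
        using Tb[OF sq[OF x]] by (simp only: real_norm_def)
    qed
    have "\<exists>g. \<forall>x\<in>{0..1}. (\<lambda>n. T a b n (x, t)) sums g x \<and> (g has_field_derivative D (Suc a) b (x, t)) (at x within {0..1})"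
      by (rule has_field_derivative_series[where f = "\<lambda>j x. T a b j (x, t)" and f' = "\<lambda>j x. T (Suc a) b j (x, t)", OF _ der ul st(1)])
         (use Tsum[of a b "(s,t)"] ab sq st in auto)
    then obtain g where g: "\<And>x. x \<in> {0..1} \<Longrightarrow> (\<lambda>n. T a b n (x, t)) sums g x \<and> (g has_field_derivative D (Suc a) b (x, t)) (at x within {0..1})"
      by blast
    have geq: "g x = D a b (x, t)" if "x \<in> {0..1}" for x
      using g[OF that] sums_unique unfolding D_def by auto
    show ?thesis
      by (rule has_field_derivative_transform_within[OF conjunct2[OF g[OF st(1)]], of 1]) (use geq st in auto)
  qed
  have dy: "((\<lambda>y. D a b (s, y)) has_real_derivative D a (Suc b) (s, t)) (at t within {0..1})"
    if ab: "a + b < m" and st: "s \<in> {0..1}" "t \<in> {0..1}" for a b s t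
  proof -
    have sq: "(s, y) \<in> unit_square" if "y \<in> {0..1}" for y
      using that st unfolding unit_square_def by auto
    have der: "((\<lambda>y. T a b j (s, y)) has_field_derivative T a (Suc b) j (s, y)) (at y within {0..1})"
      if "y \<in> {0..1}" for j y
    proof -
      have "((\<lambda>y. (lam (Suc j) * \<phi> j a s) * \<phi> j b y) has_field_derivative (lam (Suc j) * \<phi> j a s) * \<phi> j (Suc b) y) (at y within {0..1})"
        by (rule DERIV_cmult[OF phid[OF that]])
      then show ?thesis by (simp add: T_def)
    qed
    have ab1: "a + Suc b \<le> m" using ab by simp
    have ul: "uniform_limit {0..1} (\<lambda>n y. \<Sum>i<n. T a (Suc b) i (s, y)) (\<lambda>y. D a (Suc b) (s, y)) sequentially"
      unfolding D_def
    proof (rule Weierstrass_m_test[OF _ summ[OF ab1, of "c * M a * M (Suc b)"]])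
      fix n and y :: real assume y: "y \<in> {0..1}"
      show "norm (T a (Suc b) n (s, y)) \<le> c * M a * M (Suc b) * nn n powr (real a + real (Suc b) - \<alpha> - 1)"
        using Tb[OF sq[OF y]] by (simp only: real_norm_def)
    qed
    have "\<exists>g. \<forall>y\<in>{0..1}. (\<lambda>n. T a b n (s, y)) sums g y \<and> (g has_field_derivative D a (Suc b) (s, y)) (at y within {0..1})"
      by (rule has_field_derivative_series[where f = "\<lambda>j y. T a b j (s, y)" and f' = "\<lambda>j y. T a (Suc b) j (s, y)", OF _ der ul st(2)])
         (use Tsum[of a b "(s,t)"] ab sq st in auto)
    then obtain g where g: "\<And>y. y \<in> {0..1} \<Longrightarrow> (\<lambda>n. T a b n (s, y)) sums g y \<and> (g has_field_derivative D a (Suc b) (s, y)) (at y within {0..1})"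
      by blast
    have geq: "g y = D a b (s, y)" if "y \<in> {0..1}" for y
      using g[OF that] sums_unique unfolding D_def by auto
    show ?thesis
      by (rule has_field_derivative_transform_within[OF conjunct2[OF g[OF st(2)]], of 1]) (use geq st in auto)
  qed
  have hold1: "\<exists>L>0. \<forall>p\<in>unit_square. \<forall>q\<in>unit_square. \<bar>D a b p - D a b q\<bar> \<le> L * dist p q powr e"
    if ab: "a + b = m" and e: "0 < e" "e < 1" "e \<le> \<beta>" for a b e
  proof -
    have ex1: "real a + real b - \<alpha> - 1 \<le> -1 - e" using ab e \<beta>_def by simp
    have ex2: "real a + real b - \<alpha> \<le> - e" using ab e \<beta>_def by simp
    show ?thesis unfolding D_def
    proof (rule holder_series[OF e(1,2)])
      show "0 \<le> c * M a * M b" using c_pos Mnn by simp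
      show "0 \<le> c * (M (Suc a) * M b + M a * M (Suc b))" using c_pos Mnn by simp
      show "\<bar>T a b j p\<bar> \<le> c * M a * M b * real (Suc j) powr (-1-e)" if "p \<in> unit_square" for j p
      proof -
        have "nn j powr (real a + real b - \<alpha> - 1) \<le> nn j powr (-1-e)"
          by (rule powr_mono[OF ex1 nn1])
        then have "c * M a * M b * nn j powr (real a + real b - \<alpha> - 1) \<le> c * M a * M b * nn j powr (-1-e)"
          by (rule mult_left_mono) (use c_pos Mnn in simp)
        then show ?thesis using Tb[OF that, of a b j] unfolding nn_def by simp
      qed
      show "\<bar>T a b j p - T a b j q\<bar> \<le> c * (M (Suc a) * M b + M a * M (Suc b)) * real (Suc j) powr (-e) * dist p q"
        if "p \<in> unit_square" "q \<in> unit_square" for j p q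
      proof -
        have "nn j powr (real a + real b - \<alpha>) \<le> nn j powr (-e)"
          by (rule powr_mono[OF ex2 nn1])
        then have "c * (M (Suc a) * M b + M a * M (Suc b)) * nn j powr (real a + real b - \<alpha>) * dist p q
           \<le> c * (M (Suc a) * M b + M a * M (Suc b)) * nn j powr (-e) * dist p q"
          by (intro mult_right_mono mult_left_mono) (use c_pos Mnn in auto)
        then show ?thesis using Tl[OF that, of a b j] unfolding nn_def by simp
      qed
    qed
  qed
  have gen: "holder_C m e K" if e: "0 < e" "e < 1" "e \<le> \<beta>" for e
  proof -
    have "\<forall>a. \<exists>L>0. a \<le> m \<longrightarrow> (\<forall>p\<in>unit_square. \<forall>q\<in>unit_square. \<bar>D a (m-a) p - D a (m-a) q\<bar> \<le> L * dist p q powr e)"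
    proof
      fix a
      show "\<exists>L>0. a \<le> m \<longrightarrow> (\<forall>p\<in>unit_square. \<forall>q\<in>unit_square. \<bar>D a (m-a) p - D a (m-a) q\<bar> \<le> L * dist p q powr e)"
      proof (cases "a \<le> m")
        case True
        then show ?thesis using hold1[of a "m-a" e] e by auto
      next
        case False
        then show ?thesis by (intro exI[of _ 1]) simp
      qed
    qed
    then obtain Lf where Lf: "\<And>a. Lf a > 0" "\<And>a. a \<le> m \<Longrightarrow> (\<forall>p\<in>unit_square. \<forall>q\<in>unit_square. \<bar>D a (m-a) p - D a (m-a) q\<bar> \<le> Lf a * dist p q powr e)"
      by metis
    define L where "L = 1 + (\<Sum>a\<le>m. Lf a)"
    have Lfle: "Lf a \<le> L" if "a \<le> m" for a
    proof -
      have "Lf a \<le> (\<Sum>a\<le>m. Lf a)"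
        by (rule member_le_sum) (use that Lf(1) less_imp_le in auto)
      then show ?thesis unfolding L_def by simp
    qed
    have L0: "L > 0"
    proof -
      have "(\<Sum>a\<le>m. Lf a) \<ge> 0" by (rule sum_nonneg) (use Lf(1) less_imp_le in auto)
      then show ?thesis unfolding L_def by simp
    qed
    show ?thesis unfolding holder_C_def
    proof (intro exI[of _ D] conjI)
      show "\<forall>p\<in>unit_square. D 0 0 p = K p"
      proof
        fix p assume p: "p \<in> unit_square"
        obtain s t where pst: "p = (s, t)" by (cases p)
        have st: "s \<in> {0..1}" "t \<in> {0..1}" using sqI[OF p] pst by auto
        show "D 0 0 p = K p" unfolding pst D_def T_def using phi0[OF st(1)] phi0[OF st(2)] K_def by simp
      qed
      show "\<forall>a b. a + b \<le> m \<longrightarrow> continuous_on unit_square (D a b)" using cont by blast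
      show "\<forall>a b. a + b < m \<longrightarrow> (\<forall>s\<in>{0..1}. \<forall>t\<in>{0..1}.
           ((\<lambda>x. D a b (x, t)) has_real_derivative D (Suc a) b (s, t)) (at s within {0..1}) \<and>
           ((\<lambda>y. D a b (s, y)) has_real_derivative D a (Suc b) (s, t)) (at t within {0..1}))"
        using dx dy by blast
      show "\<exists>L>0. \<forall>a b. a + b = m \<longrightarrow>
           (\<forall>p\<in>unit_square. \<forall>q\<in>unit_square. \<bar>D a b p - D a b q\<bar> \<le> L * dist p q powr e)"
      proof (intro exI[of _ L] conjI allI impI ballI)
        show "L > 0" by (rule L0)
        fix a b p q assume ab: "a + b = m" and p: "p \<in> unit_square" and q: "q \<in> unit_square"
        have am: "a \<le> m" and bm: "b = m - a" using ab by auto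
        have "\<bar>D a b p - D a b q\<bar> \<le> Lf a * dist p q powr e" using Lf(2)[OF am] p q bm by blast
        also have "\<dots> \<le> L * dist p q powr e" by (rule mult_right_mono[OF Lfle[OF am]]) simp
        finally show "\<bar>D a b p - D a b q\<bar> \<le> L * dist p q powr e" .
      qed
    qed
  qed
  have bpos: "\<beta> > 0" using mfacts \<beta>_def by simp
  show ?thesis
  proof (intro conjI impI allI)
    assume nI: "\<alpha> \<notin> \<int>"
    have "\<alpha> \<noteq> real m + 1"
    proof
      assume "\<alpha> = real m + 1"
      then have "\<alpha> = of_nat (Suc m)" by simp
      then show False using nI Ints_of_nat by metis
    qed
    then have "\<beta> < 1" using mfacts \<beta>_def by simp
    then show "holder_C m \<beta> K" using gen[of \<beta>] bpos by simp
  next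
    fix \<delta> :: real assume I: "\<alpha> \<in> \<int>" and d: "0 < \<delta> \<and> \<delta> < 1"
    obtain k where k: "\<alpha> = of_int k" using I Ints_cases by blast
    have "real_of_int (int m) < real_of_int k" using mfacts(1) k by simp
    then have "int m < k" by linarith
    then have "int m + 1 \<le> k" by simp
    then have "real_of_int (int m + 1) \<le> real_of_int k" by linarith
    then have "\<alpha> \<ge> real m + 1" using k by simp
    then have "\<beta> \<ge> 1" using \<beta>_def by simp
    then show "holder_C m \<delta> K" using gen[of \<delta>] d by simp
  qed
qed

end
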